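(* Let $N\geq 1$ be an integer. Then for all $0<x<\pi/2$, \[ 2+\sum_{k=1}^{N-1}\frac{k\cdot 2^{2k+3}|B_{2k+2}|}{(2k+2)!}x^{2k+2}+p_N x^{2N+1}\tan x<\left(\frac{x}{\sin x}\right)^2+\frac{x}{\tan x}<2+\sum_{k=1}^{N-1}\frac{k\cdot 2^{2k+3}|B_{2k+2}|}{(2k+2)!}x^{2k+2}+q_N x^{2N+1}\tan x, \] with the best possible constants $p_N=0$ and $q_N=\dfrac{N\cdot 2^{2N+3}|B_{2N+2}|}{(2N+2)!}$.
   Context: The Bernoulli numbers $B_n$ are defined by $\frac{t}{e^t-1}=\sum_{n=0}^\infty B_n\frac{t^n}{n!}$ for $|t|<2\pi$. An empty sum is understood to be zero. *)

theory Defs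
  imports "HOL-Analysis.Analysis"
begin

definition bernoulli :: "nat \<Rightarrow> real" where
  "bernoulli = (THE B. \<forall>t::real. 0 < \<bar>t\<bar> \<and> \<bar>t\<bar> < 2 * pi \<longrightarrow>
       (\<lambda>n. B n * t ^ n / fact n) sums (t / (exp t - 1)))"

definition thm8_coeff :: "nat \<Rightarrow> real" where
  "thm8_coeff k = real k * 2 ^ (2 * k + 3) * \<bar>bernoulli (2 * k + 2)\<bar> / fact (2 * k + 2)"

definition thm8_bound :: "nat \<Rightarrow> real \<Rightarrow> real \<Rightarrow> real" where
  "thm8_bound N c x = 2 + (\<Sum>k = 1..N - 1. thm8_coeff k * x ^ (2 * k + 2))
                       + c * x ^ (2 * N + 1) * tan x"

end

theory Submission
  imports Defs
begin

lemma cot_pf1: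
  fixes z :: complex assumes z: "z \<notin> \<int>"
  shows "of_real pi * cot (of_real pi * z) = Digamma (1 - z) - Digamma z"
proof -
  have n1: "z \<notin> \<int>\<^sub>\<le>\<^sub>0" using z nonpos_Ints_subset_Ints by blast
  have "1 - z \<notin> \<int>"
  proof
    assume "1 - z \<in> \<int>" then have "1 - (1 - z) \<in> \<int>" by (intro Ints_diff) auto
    with z show False by simp
  qed
  then have n2: "1 - z \<notin> \<int>\<^sub>\<le>\<^sub>0" using nonpos_Ints_subset_Ints by blast
  have d1: "((\<lambda>z. rGamma z * rGamma (1 - z)) has_field_derivative
      (- rGamma z * Digamma z * rGamma (1 - z) + rGamma z * (rGamma (1 - z) * Digamma (1 - z)))) (at z)"
  proof -
    have a: "(rGamma has_field_derivative - rGamma z * Digamma z) (at z)"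
      by (rule has_field_derivative_rGamma_no_nonpos_int[OF n1])
    have b: "(rGamma has_field_derivative - rGamma (1-z) * Digamma (1-z)) (at (1-z))"
      by (rule has_field_derivative_rGamma_no_nonpos_int[OF n2])
    have c: "((\<lambda>z. rGamma (1 - z)) has_field_derivative (rGamma (1 - z) * Digamma (1 - z))) (at z)"
    proof -
      have c0: "((\<lambda>w. 1 - w) has_field_derivative -1) (at z)" by (auto intro!: derivative_eq_intros)
      show ?thesis using DERIV_chain2[of rGamma _ "\<lambda>w. 1 - w", OF b c0] by simp
    qed
    show ?thesis using DERIV_mult[OF a c] by (simp add: mult_ac)
  qed
  have d2: "((\<lambda>z. rGamma z * rGamma (1 - z)) has_field_derivative cos (of_real pi * z)) (at z)"
  proof -
    have "((\<lambda>z. sin (of_real pi * z) / of_real pi) has_field_derivative cos (of_real pi * z)) (at z)"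
      by (auto intro!: derivative_eq_intros)
    then show ?thesis by (simp add: rGamma_reflection_complex)
  qed
  have eq: "rGamma z * rGamma (1 - z) * (Digamma (1 - z) - Digamma z) = cos (of_real pi * z)"
    using DERIV_unique[OF d1 d2] by (simp add: algebra_simps)
  have sn: "sin (of_real pi * z) \<noteq> 0"
  proof
    assume "sin (of_real pi * z) = 0"
    then obtain n :: int where "of_real pi * z = of_real (n * pi)" by (auto simp: sin_eq_0)
    then have "z = of_int n" by (simp add: field_simps)
    with z show False by simp
  qed
  have "rGamma z * rGamma (1 - z) = sin (of_real pi * z) / of_real pi"
    by (rule rGamma_reflection_complex)
  with eq sn show ?thesis
    by (simp add: cot_def field_simps)
qed

lemma notInt_ne:
  fixes z :: complex assumes z: "z \<notin> \<int>"
  shows "z + of_nat k + 1 \<noteq> 0" "1 - z + of_nat k \<noteq> 0" "z + of_nat k \<noteq> 0"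
    "z\<^sup>2 - (of_nat k + 1)\<^sup>2 \<noteq> 0" "z \<noteq> 0"
proof -
  show "z + of_nat k + 1 \<noteq> 0"
  proof assume "z + of_nat k + 1 = 0" then have "z = - (of_nat k + 1)" by algebra
    with z show False by (metis Ints_1 Ints_add Ints_minus Ints_of_nat) qed
  show "1 - z + of_nat k \<noteq> 0"
  proof assume "1 - z + of_nat k = 0" then have "z = of_nat k + 1" by algebra
    with z show False by (metis Ints_1 Ints_add Ints_of_nat) qed
  show "z + of_nat k \<noteq> 0"
  proof assume "z + of_nat k = 0" then have "z = - of_nat k" by algebra
    with z show False by auto qed
  show "z \<noteq> 0" using z by auto
  show "z\<^sup>2 - (of_nat k + 1)\<^sup>2 \<noteq> 0"
  proof assume "z\<^sup>2 - (of_nat k + 1)\<^sup>2 = 0"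
    then have "(z - (of_nat k + 1)) * (z + (of_nat k + 1)) = 0" by (simp add: algebra_simps power2_eq_square)
    then consider "z - (of_nat k + 1) = 0" | "z + (of_nat k + 1) = 0" by auto
    then show False
    proof cases
      case 1 then have "z = of_nat k + 1" by algebra
      with z show False by (metis Ints_1 Ints_add Ints_of_nat)
    next
      case 2 then have "z = - (of_nat k + 1)" by algebra
      with z show False by (metis Ints_1 Ints_add Ints_minus Ints_of_nat)
    qed
  qed
qed

lemma cot_pf2:
  fixes z :: complex assumes z: "z \<notin> \<int>"
  shows "(\<lambda>k. 2 * z / (z\<^sup>2 - (of_nat k + 1)\<^sup>2)) sums (of_real pi * cot (of_real pi * z) - 1 / z)"
proof -
  have ne: "w \<noteq> 0 \<Longrightarrow> (\<lambda>k. inverse (of_nat (Suc k)) - inverse (w + of_nat k)) sums (Digamma w + euler_mascheroni)" for w :: complex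
    using summable_Digamma[of w] by (simp add: Digamma_def summable_sums)
  have z1: "1 - z \<noteq> 0" using notInt_ne(2)[OF z, of 0] by simp
  have z0: "z \<noteq> 0" using notInt_ne(5)[OF z] .
  from sums_diff[OF ne[OF z1] ne[OF z0]]
  have u: "(\<lambda>k. inverse (z + of_nat k) - inverse (1 - z + of_nat k)) sums (Digamma (1 - z) - Digamma z)"
    by simp
  have lim: "(\<lambda>n. inverse (z + of_nat n)) \<longlonglongrightarrow> 0"
    by (intro filterlim_compose[OF tendsto_inverse_0] tendsto_add_filterlim_at_infinity[OF tendsto_const] tendsto_of_nat)
  have t: "(\<lambda>n. inverse (z + of_nat n) - inverse (z + of_nat (Suc n))) sums (inverse z)"
    using telescope_sums'[OF lim] by simp
  from sums_diff[OF u t]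
  have "(\<lambda>k. inverse (z + of_nat (Suc k)) - inverse (1 - z + of_nat k)) sums (Digamma (1 - z) - Digamma z - inverse z)"
    by simp
  moreover have "inverse (z + of_nat (Suc k)) - inverse (1 - z + of_nat k) = 2 * z / (z\<^sup>2 - (of_nat k + 1)\<^sup>2)" for k
    using notInt_ne(1-4)[OF z, of k]
    by (simp add: field_simps power2_eq_square)
  ultimately show ?thesis using cot_pf1[OF z] by (simp add: divide_inverse)
qed

lemma double_sums_swap:
  fixes f :: "nat \<Rightarrow> nat \<Rightarrow> real"
  assumes row: "\<And>k. (\<lambda>j. f k j) sums g k"
  and rowabs: "\<And>k. (\<lambda>j. \<bar>f k j\<bar>) sums h k"
  and sh: "summable h"
  and col: "\<And>j. (\<lambda>k. f k j) sums c j"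
  shows "\<exists>S. g sums S \<and> c sums S"
proof -
  have hnn: "h k \<ge> 0" for k using sums_le[OF _ sums_zero rowabs[of k]] by simp
  have "(\<lambda>(k,j). \<bar>f k j\<bar>) summable_on Sigma UNIV (\<lambda>_. UNIV)"
  proof (rule summable_on_SigmaI[where g = h])
    show "((\<lambda>j. case (k, j) of (k, j) \<Rightarrow> \<bar>f k j\<bar>) has_sum h k) UNIV" for k
      using sums_nonneg_imp_has_sum[OF rowabs[of k]] by simp
    show "h summable_on UNIV" using summable_nonneg_imp_summable_on[OF sh hnn] .
  qed auto
  then have "(\<lambda>x. norm ((\<lambda>(k,j). f k j) x)) summable_on UNIV \<times> UNIV"
    by (simp add: case_prod_unfold)
  then have F: "(\<lambda>(k,j). f k j) summable_on UNIV \<times> UNIV" by (rule abs_summable_summable)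
  define S where "S = infsum (\<lambda>(k,j). f k j) (UNIV \<times> UNIV)"
  have FS: "((\<lambda>(k,j). f k j) has_sum S) (UNIV \<times> UNIV)" using F S_def by (simp add: summable_iff_has_sum_infsum)
  have rh: "((\<lambda>j. f k j) has_sum g k) UNIV" for k
  proof (rule norm_summable_imp_has_sum)
    show "summable (\<lambda>n. norm (f k n))" using rowabs[of k] by (simp add: sums_iff)
  qed (rule row)
  have "(g has_sum S) UNIV"
    using has_sum_Sigma'[OF FS] rh by simp
  then have gS: "g sums S" by (rule has_sum_imp_sums)
  have FS': "((\<lambda>(j,k). f k j) has_sum S) (UNIV \<times> UNIV)"
    using iffD1[OF has_sum_swap[where f="\<lambda>(k,j). f k j" and A=UNIV and B=UNIV] FS] by simp
  have cs: "(\<lambda>k. f k j) summable_on UNIV" for j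
    using summable_on_SigmaD1[of "\<lambda>j k. f k j" UNIV "\<lambda>_. UNIV" j] FS' by (auto simp: summable_on_def)
  have ch: "((\<lambda>k. f k j) has_sum c j) UNIV" for j
  proof -
    have "((\<lambda>k. f k j) has_sum infsum (\<lambda>k. f k j) UNIV) UNIV" using cs[of j] by (simp add: summable_iff_has_sum_infsum)
    moreover have "(\<lambda>k. f k j) sums infsum (\<lambda>k. f k j) UNIV" using calculation by (rule has_sum_imp_sums)
    ultimately show ?thesis using col[of j] sums_unique2 by metis
  qed
  have "(c has_sum S) UNIV"
    using has_sum_Sigma'[OF FS'] ch by simp
  then have "c sums S" by (rule has_sum_imp_sums)
  with gS show ?thesis by blast
qed


definition zz :: "nat \<Rightarrow> real" where "zz n = (\<Sum>k. 1 / (real k + 1) ^ (2*n))"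
definition AA :: "nat \<Rightarrow> real" where "AA j = 2 * zz (j+1) / pi ^ (2*j+2)"
definition TT :: "real \<Rightarrow> real" where "TT s = (\<Sum>j. AA j * s ^ (j+1))"

lemma sq_sums: "(\<lambda>k. 1 / (real k + 1) ^ 2) sums (pi^2/6)"
  using inverse_squares_sums by (simp add: add.commute)

lemma sq_summable: "summable (\<lambda>k. 1 / (real k + 1) ^ 2)"
  using sq_sums by (simp add: sums_iff)

lemma zz_summable: assumes "n \<ge> 1" shows "summable (\<lambda>k. 1 / (real k + 1) ^ (2*n))"
proof (rule summable_comparison_test'[OF sq_summable])
  fix k :: nat
  have "(real k + 1) ^ 2 \<le> (real k + 1) ^ (2*n)" using assms by (intro power_increasing) auto
  then show "norm (1 / (real k + 1) ^ (2*n)) \<le> 1 / (real k + 1) ^ 2"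
    by (simp add: frac_le)
qed

lemma zz_ge1: assumes "n \<ge> 1" shows "1 \<le> zz n"
  using sum_le_suminf[OF zz_summable[OF assms], of "{0}"] by (simp add: zz_def)

lemma zz_mono: assumes "n \<ge> 1" shows "zz (Suc n) \<le> zz n"
  unfolding zz_def
proof (rule suminf_le)
  fix k :: nat
  have "(real k + 1) ^ (2*n) \<le> (real k + 1) ^ (2*Suc n)" by (intro power_increasing) auto
  then show "1 / (real k + 1) ^ (2*Suc n) \<le> 1 / (real k + 1) ^ (2*n)" by (simp add: frac_le)
next
  show "summable (\<lambda>k. 1 / (real k + 1) ^ (2*Suc n))" by (rule zz_summable) simp
  show "summable (\<lambda>k. 1 / (real k + 1) ^ (2*n))" by (rule zz_summable) (use assms in simp)
qed

lemma zz1: "zz 1 = pi^2/6"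
  using sq_sums unfolding zz_def by (simp add: sums_iff)

lemma AA_pos: "0 < AA j"
  using zz_ge1[of "j+1"] by (simp add: AA_def)

lemma AA0: "AA 0 = 1/3"
proof -
  have "AA 0 = 2 * zz 1 / pi^2" by (simp add: AA_def power2_eq_square)
  also have "\<dots> = 2 * (pi^2/6) / pi^2" by (simp only: zz1)
  also have "\<dots> = 1/3" by (simp add: field_simps)
  finally show ?thesis .
qed

lemma DS:
  fixes s :: real assumes s: "\<bar>s\<bar> < pi^2"
  shows "(\<lambda>k. 2 * s / (s - (real k + 1)^2 * pi^2)) sums (- TT s) \<and> summable (\<lambda>j. AA j * s^(j+1))"
proof -
  define q where "q k = s / ((real k + 1)^2 * pi^2)" for k
  define r where "r = \<bar>s\<bar> / pi^2"
  have r1: "r < 1" "0 \<le> r" using s by (auto simp: r_def)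
  have Kge: "pi^2 \<le> (real k + 1)^2 * pi^2" for k by simp
  have qr: "\<bar>q k\<bar> \<le> r" for k
    unfolding q_def r_def abs_divide by (intro divide_left_mono) auto
  have q1: "\<bar>q k\<bar> < 1" for k using qr[of k] r1 by linarith
  define f where "f k j = -2 * q k ^ (j+1)" for k j
  define h where "h k = 2 * \<bar>q k\<bar> / (1 - \<bar>q k\<bar>)" for k
  define c where "c j = - (AA j * s^(j+1))" for j
  have geo: "\<bar>x\<bar> < 1 \<Longrightarrow> (\<lambda>j. x ^ (j+1)) sums (x / (1 - x))" for x :: real
    using sums_mult[OF geometric_sums[of x], of x] by (simp add: field_simps)
  have row: "(\<lambda>j. f k j) sums (2 * s / (s - (real k + 1)^2 * pi^2))" for k
  proof -
    have "(\<lambda>j. f k j) sums (-2 * (q k / (1 - q k)))"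
      unfolding f_def by (intro sums_mult geo q1)
    moreover have "-2 * (q k / (1 - q k)) = 2 * s / (s - (real k + 1)^2 * pi^2)"
    proof -
      have K: "(real k+1)^2*pi^2 > 0" by simp
      have "s \<noteq> (real k+1)^2*pi^2" using s Kge[of k] by linarith
      then show ?thesis using K unfolding q_def by (simp add: field_simps)
    qed
    ultimately show ?thesis by simp
  qed
  have rowabs: "(\<lambda>j. \<bar>f k j\<bar>) sums h k" for k
  proof -
    have "(\<lambda>j. 2 * \<bar>q k\<bar> ^ (j+1)) sums (2 * (\<bar>q k\<bar> / (1 - \<bar>q k\<bar>)))"
      by (intro sums_mult geo) (use q1 in simp)
    then show ?thesis by (simp add: f_def h_def abs_mult power_abs)
  qed
  have sh: "summable h"
  proof (rule summable_comparison_test'[OF summable_mult[OF sq_summable, of "2 * \<bar>s\<bar> / pi^2 / (1 - r)"]])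
    fix k :: nat
    have "h k \<le> 2 * \<bar>q k\<bar> / (1 - r)"
      unfolding h_def using qr[of k] r1 q1[of k] by (intro divide_left_mono) auto
    also have "\<dots> = 2 * \<bar>s\<bar> / pi^2 / (1 - r) * (1 / (real k + 1)^2)"
      by (simp add: q_def abs_divide)
    finally show "norm (h k) \<le> 2 * \<bar>s\<bar> / pi^2 / (1 - r) * (1 / (real k + 1)^2)"
      using q1[of k] by (simp add: h_def)
  qed
  have col: "(\<lambda>k. f k j) sums c j" for j
  proof -
    have "(\<lambda>k. (-2 * s^(j+1) / pi^(2*j+2)) * (1 / (real k + 1) ^ (2*(j+1)))) sums
          ((-2 * s^(j+1) / pi^(2*j+2)) * zz (j+1))"
      unfolding zz_def by (intro sums_mult summable_sums zz_summable) simp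
    moreover have "f k j = (-2 * s^(j+1) / pi^(2*j+2)) * (1 / (real k + 1) ^ (2*(j+1)))" for k
    proof -
      have e0: "((real k + 1)^2 * pi^2) ^ (j+1) = (real k + 1) ^ (2*(j+1)) * pi^(2*(j+1))"
        by (simp only: power_mult_distrib power_mult)
      have t: "2*(j+1) = 2*j+2" by simp
      have e: "((real k + 1)^2 * pi^2) ^ (j+1) = (real k + 1) ^ (2*(j+1)) * pi^(2*j+2)"
        using e0 by (simp only: t)
      show ?thesis unfolding f_def q_def power_divide e by simp
    qed
    moreover have "(-2 * s^(j+1) / pi^(2*j+2)) * zz (j+1) = c j"
      by (simp add: c_def AA_def)
    ultimately show ?thesis by simp
  qed
  obtain S where S: "(\<lambda>k. 2 * s / (s - (real k + 1)^2 * pi^2)) sums S" "c sums S"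
    using double_sums_swap[OF row rowabs sh col] by blast
  have sm: "summable (\<lambda>j. AA j * s^(j+1))"
    using summable_minus[OF sums_summable[OF S(2)]] by (simp add: c_def)
  have "S = - TT s" using S(2) sm unfolding TT_def c_def
    by (metis sums_minus sums_unique2 summable_sums)
  with S sm show ?thesis by simp
qed


lemma pf3:
  fixes w :: complex assumes w: "w / of_real pi \<notin> \<int>"
  shows "(\<lambda>k. 2 * w^2 / (w^2 - (of_nat k + 1)^2 * (of_real pi)^2)) sums (w * cot w - 1)"
proof -
  define z where "z = w / of_real pi"
  have z: "z \<notin> \<int>" using w z_def by simp
  have pi0: "(of_real pi :: complex) \<noteq> 0" by simp
  have wz: "w = of_real pi * z" using pi0 by (simp add: z_def)
  have z0: "z \<noteq> 0" using notInt_ne(5)[OF z] .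
  from sums_mult[OF cot_pf2[OF z], of z]
  have "(\<lambda>k. z * (2 * z / (z\<^sup>2 - (of_nat k + 1)\<^sup>2))) sums (z * (of_real pi * cot (of_real pi * z) - 1 / z))" .
  moreover have "z * (2 * z / (z\<^sup>2 - (of_nat k + 1)\<^sup>2)) = 2 * w^2 / (w^2 - (of_nat k + 1)^2 * (of_real pi)^2)" for k
  proof -
    have d: "z\<^sup>2 - (of_nat k + 1)\<^sup>2 \<noteq> 0" using notInt_ne(4)[OF z] .
    have d2: "w^2 - (of_nat k + 1)^2 * (of_real pi)^2 = (of_real pi)^2 * (z\<^sup>2 - (of_nat k + 1)\<^sup>2)"
      by (simp add: wz power_mult_distrib algebra_simps)
    have "2 * w^2 / ((of_real pi)^2 * (z\<^sup>2 - (of_nat k + 1)\<^sup>2)) =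
          ((of_real pi)^2 * (2 * z^2)) / ((of_real pi)^2 * (z\<^sup>2 - (of_nat k + 1)\<^sup>2))"
      by (simp add: wz power_mult_distrib mult_ac)
    also have "\<dots> = 2 * z^2 / (z\<^sup>2 - (of_nat k + 1)\<^sup>2)" using pi0 by simp
    finally show ?thesis unfolding d2 by (simp add: power2_eq_square)
  qed
  moreover have "z * (of_real pi * cot (of_real pi * z) - 1 / z) = w * cot w - 1"
    using z0 by (simp add: wz field_simps)
  ultimately show ?thesis by simp
qed

lemma xcot_series:
  fixes x :: real assumes x: "x \<noteq> 0" "\<bar>x\<bar> < pi"
  shows "x * cos x / sin x = 1 - TT (x^2)"
proof -
  define w where "w = (of_real x :: complex)"
  have "w / of_real pi \<notin> \<int>"
  proof
    assume "w / of_real pi \<in> \<int>"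
    then have "of_real (x / pi) \<in> (\<int> :: complex set)" by (simp add: w_def)
    then obtain n :: int where n: "x / pi = of_int n" by (auto simp: complex_is_Int_iff)
    have "\<bar>x / pi\<bar> < 1" using x by (simp add: abs_divide)
    with n have "n = 0" by simp
    with n x show False by simp
  qed
  from pf3[OF this]
  have "(\<lambda>k. of_real (2 * x^2 / (x^2 - (real k + 1)^2 * pi^2)) :: complex) sums of_real (x * cot x - 1)"
    by (simp add: w_def cot_of_real)
  then have "(\<lambda>k. 2 * x^2 / (x^2 - (real k + 1)^2 * pi^2)) sums (x * cot x - 1)"
    by (simp only: sums_of_real_iff)
  moreover have "\<bar>x^2\<bar> < pi^2"
  proof -
    have "\<bar>x\<bar>^2 < pi^2" by (rule power_strict_mono) (use x in auto)
    then show ?thesis by simp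
  qed
  ultimately have "x * cot x - 1 = - TT (x^2)" using DS sums_unique2 by blast
  then show ?thesis by (simp add: cot_def)
qed


definition B0 :: "nat \<Rightarrow> real" where
  "B0 n = (if n = 0 then 1 else if n = 1 then -1/2 else if odd n then 0 else
     (-1)^(n div 2 - 1) * AA (n div 2 - 1) * fact n / 4^(n div 2))"

lemma hyp_series:
  fixes y :: real assumes y: "y \<noteq> 0" "\<bar>y\<bar> < pi"
  shows "y * (exp y + inverse (exp y)) / (exp y - inverse (exp y)) = 1 - TT (-(y^2))"
proof -
  define w where "w = \<i> * complex_of_real y"
  have "w / of_real pi \<notin> \<int>"
  proof
    assume "w / of_real pi \<in> \<int>"
    then have "Im (w / of_real pi) = 0" by (auto simp: complex_is_Int_iff)
    then show False using y by (simp add: w_def)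
  qed
  note P = pf3[OF this]
  have w2: "w^2 = of_real (-(y^2))" by (simp add: w_def power_mult_distrib)
  have cs: "cos w = of_real ((exp y + inverse (exp y)) / 2)"
    using cosh_complex[of "of_real y"] by (simp add: w_def exp_of_real)
  have sn: "sin w = \<i> * of_real ((exp y - inverse (exp y)) / 2)"
    using sin_i_times[of "of_real y"] by (simp add: w_def exp_of_real)
  have "w * cot w - 1 = of_real (y * (exp y + inverse (exp y)) / (exp y - inverse (exp y)) - 1)"
  proof -
    have r: "((a::real) / 2) / (b / 2) = a / b" for a b by (cases "b = 0") (simp_all add: field_simps)
    have "w * cot w = of_real y * (of_real ((exp y + inverse (exp y)) / 2) / of_real ((exp y - inverse (exp y)) / 2))"
      unfolding cot_def cs sn by (simp add: w_def)
    also have "\<dots> = of_real (y * (((exp y + inverse (exp y)) / 2) / ((exp y - inverse (exp y)) / 2)))"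
      by simp
    also have "\<dots> = of_real (y * (exp y + inverse (exp y)) / (exp y - inverse (exp y)))"
      by (simp only: r times_divide_eq_right)
    finally show ?thesis by simp
  qed
  with P have "(\<lambda>k. of_real (2 * (-(y^2)) / ((-(y^2)) - (real k + 1)^2 * pi^2)) :: complex) sums
      of_real (y * (exp y + inverse (exp y)) / (exp y - inverse (exp y)) - 1)"
    unfolding w2 by simp
  then have "(\<lambda>k. 2 * (-(y^2)) / ((-(y^2)) - (real k + 1)^2 * pi^2)) sums
      (y * (exp y + inverse (exp y)) / (exp y - inverse (exp y)) - 1)"
    by (simp only: sums_of_real_iff)
  moreover have "\<bar>-(y^2)\<bar> < pi^2"
  proof -
    have "\<bar>y\<bar>^2 < pi^2" by (rule power_strict_mono) (use y in auto)
    then show ?thesis by simp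
  qed
  ultimately have "y * (exp y + inverse (exp y)) / (exp y - inverse (exp y)) - 1 = - TT (-(y^2))"
    using DS sums_unique2 by blast
  then show ?thesis by linarith
qed

lemma B0_sums:
  fixes t :: real assumes t: "\<bar>t\<bar> < 2*pi"
  shows "(\<lambda>n. B0 n * t^n / fact n) sums (1 - t/2 - TT (-(t^2/4)))"
proof -
  define g where "g n = B0 n * t^n / fact n" for n
  define s where "s = -(t^2/4)"
  have s: "\<bar>s\<bar> < pi^2"
  proof -
    have "\<bar>t\<bar>^2 < (2*pi)^2" by (rule power_strict_mono) (use t in auto)
    then show ?thesis by (simp add: s_def power_mult_distrib)
  qed
  have T: "(\<lambda>j. AA j * s^(j+1)) sums TT s"
    using DS[OF s] unfolding TT_def by (simp add: summable_sums)
  have e: "g (2*j+2) = - (AA j * s^(j+1))" for j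
  proof -
    have f0: "fact (2*j+2) \<noteq> (0::real)" by simp
    have m: "-(t^2/4) = (-1) * (t^2/4)" by simp
    have p: "t^(2*j+2) = (t^2)^(j+1)" by (subst power_mult[symmetric]) (simp add: algebra_simps)
    have "s^(j+1) = (-1)^(j+1) * t^(2*j+2) / 4^(j+1)"
      unfolding s_def m power_mult_distrib power_divide p by simp
    then show ?thesis using f0 by (simp add: g_def B0_def)
  qed
  have "(\<lambda>j. g (2*j+2)) sums (- TT s)" unfolding e by (intro sums_minus T)
  then have "(\<lambda>j. g (2*j + 2)) sums (- TT s)" .
  moreover have "(\<lambda>j. (\<lambda>i. g (i + 2)) (2*j)) sums (- TT s) \<longleftrightarrow> (\<lambda>i. g (i + 2)) sums (- TT s)"
  proof (rule sums_mono_reindex)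
    show "strict_mono (\<lambda>j::nat. 2*j)" by (simp add: strict_mono_def)
    fix n assume "n \<notin> range (\<lambda>j::nat. 2*j)"
    then have "odd n" by (metis evenE rangeI)
    then show "g (n + 2) = 0" by (simp add: g_def B0_def)
  qed
  ultimately have "(\<lambda>i. g (i + 2)) sums (- TT s)" by simp
  then have "g sums (- TT s + (\<Sum>i<2. g i))" by (simp only: sums_iff_shift)
  moreover have "(\<Sum>i<2. g i) = 1 - t/2" by (simp add: g_def B0_def eval_nat_numeral)
  ultimately have "g sums (1 - t/2 - TT (-(t^2/4)))" by (simp add: s_def)
  then show ?thesis by (simp add: g_def[abs_def])
qed

lemma bern_t:
  fixes t :: real assumes t: "t \<noteq> 0" "\<bar>t\<bar> < 2*pi"
  shows "t / (exp t - 1) = 1 - t/2 - TT (-(t^2/4))"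
proof -
  define y where "y = t/2"
  have y: "y \<noteq> 0" "\<bar>y\<bar> < pi" using t by (auto simp: y_def)
  define u where "u = exp y"
  have u: "u > 0" by (simp add: u_def)
  have et: "exp t = u^2" by (simp add: u_def y_def power2_eq_square exp_add[symmetric])
  have u1: "u^2 \<noteq> 1" using t et by (metis exp_eq_one_iff)
  have "u^2 - 1 \<noteq> 0" using u1 by simp
  have a1: "u*u - 1 \<noteq> 0" using u1 by (simp add: power2_eq_square)
  have a2: "u*(u*u) - u \<noteq> 0"
  proof -
    have "u*(u*u) - u = u * (u*u - 1)" by (simp add: algebra_simps)
    then show ?thesis using a1 u by simp
  qed
  have "y * (u + inverse u) / (u - inverse u) = y * (u^2 + 1) / (u^2 - 1)"
    using u a1 a2 by (simp add: field_simps power2_eq_square)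
  moreover have "t / (exp t - 1) = y * (u^2 + 1) / (u^2 - 1) - y"
    using \<open>u^2 - 1 \<noteq> 0\<close> by (simp add: et y_def field_simps)
  moreover have "y^2 = t^2/4" by (simp add: y_def power_divide)
  moreover have H: "y * (u + inverse u) / (u - inverse u) = 1 - TT (-(t^2/4))"
    using hyp_series[OF y] \<open>y^2 = t^2/4\<close> by (simp add: u_def)
  ultimately show ?thesis by (simp add: y_def)
qed



lemma bern_unique:
  fixes B B' :: "nat \<Rightarrow> real"
  assumes hB: "\<forall>t::real. 0 < \<bar>t\<bar> \<and> \<bar>t\<bar> < 2 * pi \<longrightarrow> (\<lambda>n. B n * t ^ n / fact n) sums (t / (exp t - 1))"
  and hB': "\<forall>t::real. 0 < \<bar>t\<bar> \<and> \<bar>t\<bar> < 2 * pi \<longrightarrow> (\<lambda>n. B' n * t ^ n / fact n) sums (t / (exp t - 1))"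
  shows "B = B'"
proof -
  define d where "d n = (B n - B' n) / fact n" for n
  have sm: "(\<lambda>n. d n * t^n) sums 0" if "t \<noteq> 0" "norm t < 2*pi" for t :: real
  proof -
    have "0 < \<bar>t\<bar> \<and> \<bar>t\<bar> < 2 * pi" using that by auto
    from sums_diff[OF hB[rule_format, OF this] hB'[rule_format, OF this]]
    have "(\<lambda>n. B n * t ^ n / fact n - B' n * t ^ n / fact n) sums 0" by simp
    moreover have "B n * t ^ n / fact n - B' n * t ^ n / fact n = d n * t^n" for n
      by (simp add: d_def diff_divide_distrib algebra_simps)
    ultimately show ?thesis by simp
  qed
  have "d m = 0" for m
  proof (induction m rule: less_induct)
    case (less m)
    have L: "\<And>x. x \<noteq> 0 \<Longrightarrow> norm x < 2*pi \<Longrightarrow> (\<lambda>n. d (n + m) * x ^ n) sums ((\<lambda>_. 0::real) x)"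
    proof -
      fix x :: real assume x: "x \<noteq> 0" "norm x < 2*pi"
      have "(\<Sum>i<m. d i * x^i) = 0" using less by simp
      then have "(\<lambda>n. d (n + m) * x ^ (n + m)) sums 0"
        using sums_iff_shift[of "\<lambda>n. d n * x^n" m 0] sm[OF x] by simp
      then have "(\<lambda>n. d (n + m) * x ^ (n + m) / x^m) sums (0 / x^m)" by (rule sums_divide)
      moreover have "d (n + m) * x ^ (n + m) / x^m = d (n + m) * x ^ n" for n
        using x by (simp add: power_add)
      ultimately show "(\<lambda>n. d (n + m) * x ^ n) sums ((\<lambda>_. 0::real) x)" by simp
    qed
    have "((\<lambda>_::real. 0::real) \<longlongrightarrow> d (0 + m)) (at (0::real))"
      using powser_limit_0_strong[where s="2*pi", OF _ L] by simp
    then show "d m = 0" using LIM_const_eq by (metis add_0)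
  qed
  then show ?thesis by (auto simp: d_def fun_eq_iff)
qed

lemma bernoulli_eq: "bernoulli = B0"
  unfolding bernoulli_def
proof (rule the_equality)
  show "\<forall>t::real. 0 < \<bar>t\<bar> \<and> \<bar>t\<bar> < 2 * pi \<longrightarrow> (\<lambda>n. B0 n * t ^ n / fact n) sums (t / (exp t - 1))"
  proof (intro allI impI)
    fix t :: real assume t: "0 < \<bar>t\<bar> \<and> \<bar>t\<bar> < 2 * pi"
    then have "t \<noteq> 0" "\<bar>t\<bar> < 2 * pi" by auto
    from B0_sums[OF this(2)] bern_t[OF this] show "(\<lambda>n. B0 n * t ^ n / fact n) sums (t / (exp t - 1))" by simp
  qed
  then show "\<And>B. \<forall>t::real. 0 < \<bar>t\<bar> \<and> \<bar>t\<bar> < 2 * pi \<longrightarrow> (\<lambda>n. B n * t ^ n / fact n) sums (t / (exp t - 1)) \<Longrightarrow> B = B0"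
    using bern_unique by blast
qed

lemma bern_abs: "\<bar>bernoulli (2*k+2)\<bar> = AA k * fact (2*k+2) / 4^(k+1)"
proof -
  have "(2*k+2) div 2 = k + 1" by simp
  then have "B0 (2*k+2) = (-1)^k * AA k * fact (2*k+2) / 4^(k+1)" by (simp add: B0_def)
  then show ?thesis using AA_pos[of k] by (simp add: bernoulli_eq abs_mult power_abs)
qed

lemma coeff_eq: "thm8_coeff k = 2 * real k * AA k"
proof -
  have p: "(2::real)^(2*k+3) = 2 * 4^(k+1)"
  proof -
    have a: "(2::real)^(2*k+3) = 2^3 * 2^(2*k)" by (simp add: power_add)
    have b: "(2::real)^(2*k) = 4^k" by (simp add: power_mult)
    show ?thesis unfolding a b by simp
  qed
  have g: "\<And>F Q r A :: real. F \<noteq> 0 \<Longrightarrow> Q \<noteq> 0 \<Longrightarrow> r * (2 * Q) * (A * F / Q) / F = 2 * r * A"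
    by (simp add: field_simps)
  show ?thesis unfolding thm8_coeff_def bern_abs p by (rule g) simp_all
qed



definition cT :: "nat \<Rightarrow> real" where "cT n = (if n = 0 then 0 else AA (n - 1))"
definition TD :: "real \<Rightarrow> real" where "TD s = (\<Sum>n. (real n + 1) * AA n * s^n)"

lemma TT_powser: assumes "\<bar>s\<bar> < pi^2" shows "(\<lambda>n. cT n * s^n) sums TT s"
proof -
  have "(\<lambda>j. AA j * s^(j+1)) sums TT s" using DS[OF assms] unfolding TT_def by (simp add: summable_sums)
  then have "(\<lambda>j. cT (Suc j) * s^(Suc j)) sums TT s" by (simp add: cT_def)
  then show ?thesis by (subst (asm) sums_Suc_iff) (simp add: cT_def)
qed

lemma diffs_cT: "diffs cT n = (real n + 1) * AA n"
  by (simp add: diffs_def cT_def add.commute)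

lemma TD_summable: assumes "\<bar>s\<bar> < pi^2" shows "(\<lambda>n. (real n + 1) * AA n * s^n) sums TD s"
proof -
  have "summable (\<lambda>n. diffs cT n * s^n)"
    by (rule termdiff_converges[of s "pi^2"]) (use assms TT_powser sums_summable in auto)
  then show ?thesis unfolding TD_def diffs_cT by (simp add: summable_sums)
qed

lemma TT_deriv: assumes s: "\<bar>s\<bar> < pi^2" shows "(TT has_field_derivative TD s) (at s)"
proof -
  define K where "K = (\<bar>s\<bar> + pi^2) / 2"
  have K: "\<bar>s\<bar> < \<bar>K\<bar>" "\<bar>K\<bar> < pi^2" using s by (auto simp: K_def)
  have d: "((\<lambda>x. \<Sum>n. cT n * x^n) has_field_derivative (\<Sum>n. diffs cT n * s^n)) (at s)"
    by (rule termdiffs_strong[of _ K]) (use K TT_powser sums_summable in auto)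
  show ?thesis
  proof (rule has_field_derivative_transform_within_open[OF _ _ _, where S="ball 0 (pi^2)"])
    show "((\<lambda>x. \<Sum>n. cT n * x^n) has_field_derivative TD s) (at s)"
      using d unfolding TD_def diffs_cT .
    show "s \<in> ball 0 (pi^2)" using s by simp
    show "(\<Sum>n. cT n * x ^ n) = TT x" if "x \<in> ball 0 (pi^2)" for x
      using TT_powser[of x] that by (simp add: sums_iff)
  qed simp
qed

lemma f_closed:
  fixes x :: real assumes x: "0 < x" "x < pi"
  shows "(x / sin x)^2 + x / tan x = 2 - 2 * TT (x^2) + 2 * x^2 * TD (x^2)"
proof -
  have sx: "sin x > 0" using x by (simp add: sin_gt_zero)
  have x2: "\<bar>x^2\<bar> < pi^2"
  proof -
    have "\<bar>x\<bar>^2 < pi^2" by (rule power_strict_mono) (use x in auto)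
    then show ?thesis by simp
  qed
  have d1: "((\<lambda>y. y * cos y / sin y) has_field_derivative (cos x * sin x - x) / (sin x)^2) (at x)"
    using sx by (auto intro!: derivative_eq_intros simp: field_simps power2_eq_square)
      (metis distrib_left mult_1_right sin_cos_squared_add3)
  have d2: "((\<lambda>y. 1 - TT (y^2)) has_field_derivative - (TD (x^2) * (2 * x))) (at x)"
  proof -
    have c0: "((\<lambda>y. y^2) has_field_derivative 2*x) (at x)" by (auto intro!: derivative_eq_intros)
    have c1: "((\<lambda>y. TT (y^2)) has_field_derivative TD (x^2) * (2*x)) (at x)"
      using DERIV_chain2[of TT _ "\<lambda>y. y^2", OF TT_deriv[OF x2] c0] by simp
    show ?thesis using DERIV_diff[OF DERIV_const[of 1] c1] by simp
  qed
  have d3: "((\<lambda>y. y * cos y / sin y) has_field_derivative - (TD (x^2) * (2 * x))) (at x)"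
  proof (rule has_field_derivative_transform_within_open[OF d2, where S="{0<..<pi}"])
    show "1 - TT (y^2) = y * cos y / sin y" if "y \<in> {0<..<pi}" for y
      using xcot_series[of y] that by simp
  qed (use x in auto)
  have eq: "(cos x * sin x - x) / (sin x)^2 = - (TD (x^2) * (2 * x))" using DERIV_unique[OF d1 d3] .
  have xc: "x * cos x / sin x = 1 - TT (x^2)" using xcot_series[of x] x by simp
  have "(x / sin x)^2 = x * cos x / sin x - x * ((cos x * sin x - x) / (sin x)^2)"
    using sx by (simp add: field_simps power2_eq_square)
  moreover have "x / tan x = x * cos x / sin x" by (simp add: tan_def)
  ultimately show ?thesis unfolding eq xc by (simp add: power2_eq_square algebra_simps)
qed

lemma f_series:
  fixes x :: real assumes x: "0 < x" "x < pi"
  shows "(\<lambda>j. 2 * real j * AA j * (x^2)^(j+1)) sums ((x / sin x)^2 + x / tan x - 2)"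
proof -
  have x2: "\<bar>x^2\<bar> < pi^2"
  proof -
    have "\<bar>x\<bar>^2 < pi^2" by (rule power_strict_mono) (use x in auto)
    then show ?thesis by simp
  qed
  have a: "(\<lambda>j. 2 * x^2 * ((real j + 1) * AA j * (x^2)^j)) sums (2 * x^2 * TD (x^2))"
    by (intro sums_mult TD_summable x2)
  have b: "(\<lambda>j. 2 * (AA j * (x^2)^(j+1))) sums (2 * TT (x^2))"
    using DS[OF x2] unfolding TT_def by (intro sums_mult) (simp add: summable_sums)
  from sums_diff[OF a b]
  have "(\<lambda>j. 2 * x^2 * ((real j + 1) * AA j * (x^2)^j) - 2 * (AA j * (x^2)^(j+1))) sums
        (2 * x^2 * TD (x^2) - 2 * TT (x^2))" .
  moreover have "2 * x^2 * ((real j + 1) * AA j * (x^2)^j) - 2 * (AA j * (x^2)^(j+1)) = 2 * real j * AA j * (x^2)^(j+1)" for j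
    by (simp add: algebra_simps)
  ultimately show ?thesis using f_closed[OF x] by simp
qed

lemma tan_series:
  fixes x :: real assumes x: "0 < x" "x < pi/2"
  shows "(\<lambda>j. (4^(j+1) - 1) * AA j * (x^2)^(j+1)) sums (x * tan x)"
proof -
  have sx: "sin x > 0" using x by (simp add: sin_gt_zero)
  have cx: "cos x > 0" using x by (simp add: cos_gt_zero)
  have x1: "x^2 < pi^2" "(2*x)^2 < pi^2"
    by (rule power_strict_mono; use x in auto)+
  have s1: "\<bar>x^2\<bar> < pi^2" "\<bar>4*x^2\<bar> < pi^2" using x1 by (auto simp: power_mult_distrib)
  have a: "x * cos x / sin x = 1 - TT (x^2)" using xcot_series[of x] x by simp
  have b: "(2*x) * cos (2*x) / sin (2*x) = 1 - TT (4*x^2)" using xcot_series[of "2*x"] x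
    by (simp add: power_mult_distrib)
  have trig: "x * tan x = x * cos x / sin x - (2*x) * cos (2*x) / sin (2*x)"
  proof -
    have e1: "sin (2*x) = 2 * sin x * cos x" by (rule sin_double)
    have e2: "cos (2*x) = (cos x)^2 - (sin x)^2" by (rule cos_double)
    show ?thesis unfolding e1 e2 using sx cx by (simp add: tan_def field_simps power2_eq_square)
  qed
  have A: "(\<lambda>j. AA j * (4*x^2)^(j+1)) sums TT (4*x^2)"
    using DS[OF s1(2)] unfolding TT_def by (simp add: summable_sums)
  have B: "(\<lambda>j. AA j * (x^2)^(j+1)) sums TT (x^2)"
    using DS[OF s1(1)] unfolding TT_def by (simp add: summable_sums)
  from sums_diff[OF A B] have "(\<lambda>j. AA j * (4*x^2)^(j+1) - AA j * (x^2)^(j+1)) sums (TT (4*x^2) - TT (x^2))" .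
  moreover have "AA j * (4*x^2)^(j+1) - AA j * (x^2)^(j+1) = (4^(j+1) - 1) * AA j * (x^2)^(j+1)" for j
    by (simp add: power_mult_distrib algebra_simps)
  moreover have "TT (4*x^2) - TT (x^2) = x * tan x" using trig a b by simp
  ultimately show ?thesis by simp
qed



lemma zz_anti: assumes "m \<ge> 1" shows "zz (m + d) \<le> zz m"
proof (induction d)
  case (Suc d)
  have "zz (Suc (m + d)) \<le> zz (m + d)" by (rule zz_mono) (use assms in simp)
  then show ?case using Suc by simp
qed simp

lemma pi_sq_lt10: "pi^2 < 10"
proof -
  have "pi < 3.15" using pi_approx by simp
  then have "pi^2 < 3.15^2" by (intro power_strict_mono) (use pi_gt_zero in auto)
  then show ?thesis by (simp add: power2_eq_square)
qed

lemma num_ineq: "j \<ge> 1 \<Longrightarrow> (real j + 1) * 10 \<le> 2 * (4^(j+1) - 1)"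
proof (induction j)
  case (Suc j)
  show ?case
  proof (cases "j = 0")
    case True then show ?thesis by simp
  next
    case False
    then have "(real j + 1) * 10 \<le> 2 * (4^(j+1) - 1)" using Suc by simp
    moreover have "(4::real)^(j+1) \<ge> 1" by (rule one_le_power) simp
    ultimately show ?thesis by simp
  qed
qed simp

lemma coeff_ineq:
  assumes N: "N \<ge> 1" and j: "j \<ge> 1"
  shows "(real j + real N) * AA (j + N) < real N * AA N * ((4::real)^(j+1) - 1) * AA j"
proof -
  define P where "P = pi^(2*j)"
  define Q where "Q = (pi::real)^2"
  have P: "P > 0" and Q: "Q > 0" by (simp_all add: P_def Q_def)
  have a1: "AA (j + N) \<le> AA N / P"
  proof -
    have "zz (N + 1 + j) \<le> zz (N + 1)" by (rule zz_anti) simp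
    then have z: "zz (j + N + 1) \<le> zz (N + 1)" by (simp add: add_ac)
    have e: "pi ^ (2 * (j + N) + 2) = P * pi ^ (2*N+2)"
      by (simp add: P_def power_add[symmetric] algebra_simps)
    show ?thesis unfolding AA_def e using z P
      by (simp add: divide_right_mono field_simps)
  qed
  have a2: "AA j \<ge> 2 / (P * Q)"
  proof -
    have e: "pi ^ (2*j+2) = P * Q" by (simp add: P_def Q_def power_add power2_eq_square)
    show ?thesis unfolding AA_def e using zz_ge1[of "j+1"] P Q
      by (simp add: divide_right_mono)
  qed
  have AN: "AA N > 0" by (rule AA_pos)
  have "(4::real)^(j+1) > 1" by (rule one_less_power) auto
  then have f4: "(4::real)^(j+1) - 1 > 0" by simp
  have key: "(real j + real N) * Q < 2 * real N * ((4::real)^(j+1) - 1)"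
  proof -
    have "1 * real j \<le> real N * real j" using N by (intro mult_right_mono) auto
    then have "real j + real N \<le> real N * (real j + 1)" by (simp add: algebra_simps)
    then have "(real j + real N) * Q \<le> real N * (real j + 1) * Q" using Q by (simp add: mult_right_mono)
    also have "\<dots> < real N * (real j + 1) * 10"
      using pi_sq_lt10 N unfolding Q_def by (intro mult_strict_left_mono) auto
    also have "\<dots> \<le> real N * (2 * (4^(j+1) - 1))"
      using num_ineq[OF j] N by (simp add: mult.assoc)
    finally show ?thesis by (simp add: algebra_simps)
  qed
  have "(real j + real N) * AA (j + N) \<le> (real j + real N) * (AA N / P)"
    using a1 by (intro mult_left_mono) auto
  also have "\<dots> = AA N * ((real j + real N) * Q) / (P * Q)" using P Q by (simp add: field_simps)
  also have "\<dots> < AA N * (2 * real N * ((4::real)^(j+1) - 1)) / (P * Q)"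
    using key AN P Q by (intro divide_strict_right_mono mult_strict_left_mono) auto
  also have "\<dots> = real N * AA N * ((4::real)^(j+1) - 1) * (2 / (P * Q))" by simp
  also have "\<dots> \<le> real N * AA N * ((4::real)^(j+1) - 1) * AA j"
    using a2 AN f4 N by (intro mult_left_mono) auto
  finally show ?thesis .
qed




definition uu :: "real \<Rightarrow> nat \<Rightarrow> real" where "uu s j = 2 * real j * AA j * s^(j+1)"

lemma uu_pos: "s > 0 \<Longrightarrow> j \<ge> 1 \<Longrightarrow> uu s j > 0"
  unfolding uu_def using AA_pos[of j] by simp

lemma uu_nonneg: "s > 0 \<Longrightarrow> uu s j \<ge> 0"
  unfolding uu_def using AA_pos[of j] by simp

lemma bound_eq:
  assumes N: "N \<ge> 1"
  shows "thm8_bound N c x = 2 + (\<Sum>k<N. uu (x^2) k) + c * x^(2*N+1) * tan x"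
proof -
  have t: "thm8_coeff k * x^(2*k+2) = uu (x^2) k" for k
  proof -
    have "x^(2*k+2) = (x^2)^(k+1)" by (subst power_mult[symmetric]) (simp add: algebra_simps)
    then show ?thesis by (simp add: coeff_eq uu_def)
  qed
  have "{..<N} = insert 0 {1..N-1}" using N by auto
  then have "(\<Sum>k<N. uu (x^2) k) = (\<Sum>k=1..N-1. uu (x^2) k)" by (simp add: uu_def)
  then show ?thesis unfolding thm8_bound_def t by simp
qed

lemma f_tail:
  assumes x: "0 < x" "x < pi/2"
  shows "(\<lambda>j. uu (x^2) (j+N)) sums ((x / sin x)^2 + x / tan x - 2 - (\<Sum>k<N. uu (x^2) k))"
proof -
  have "(\<lambda>j. uu (x^2) j) sums ((x / sin x)^2 + x / tan x - 2)"
    using f_series[of x] x unfolding uu_def by simp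
  then show ?thesis using sums_iff_shift[of "uu (x^2)" N] by simp
qed

lemma tail_lower:
  assumes N: "N \<ge> 1" and x: "0 < x" "x < pi/2"
  shows "uu (x^2) N \<le> (x / sin x)^2 + x / tan x - 2 - (\<Sum>k<N. uu (x^2) k)"
proof -
  note T = f_tail[OF x, of N]
  have s: "x^2 > 0" using x by simp
  have "sum (\<lambda>j. uu (x^2) (j+N)) {0} \<le> suminf (\<lambda>j. uu (x^2) (j+N))"
  proof (rule sum_le_suminf)
    show "summable (\<lambda>j. uu (x^2) (j+N))" using T by (rule sums_summable)
  qed (use uu_nonneg[OF s] in auto)
  then show ?thesis using T by (simp add: sums_iff)
qed

lemma tail_upper:
  assumes N: "N \<ge> 1" and x: "0 < x" "x < pi/2"
  shows "(x / sin x)^2 + x / tan x - 2 - (\<Sum>k<N. uu (x^2) k) < thm8_coeff N * x^(2*N+1) * tan x"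
proof -
  define s where "s = x^2"
  have s: "s > 0" using x by (simp add: s_def)
  define Rm where "Rm = (x / sin x)^2 + x / tan x - 2 - (\<Sum>k<N. uu (x^2) k)"
  have R: "(\<lambda>j. uu s (j+N)) sums Rm" using f_tail[OF x, of N] by (simp add: Rm_def s_def)
  define w where "w j = 2 * real N * AA N * s^N * ((4^(j+1) - 1) * AA j * s^(j+1))" for j
  have W: "w sums (thm8_coeff N * x^(2*N+1) * tan x)"
  proof -
    have "w sums (2 * real N * AA N * s^N * (x * tan x))"
      unfolding w_def using tan_series[OF x] by (intro sums_mult) (simp add: s_def)
    moreover have "2 * real N * AA N * s^N * (x * tan x) = thm8_coeff N * x^(2*N+1) * tan x"
      by (simp add: coeff_eq s_def power_mult[symmetric])
    ultimately show ?thesis by simp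
  qed
  have le: "uu s (j+N) \<le> w j" for j
  proof (cases "j = 0")
    case True then show ?thesis by (simp add: uu_def w_def AA0 power_add algebra_simps)
  next
    case False
    then have j: "j \<ge> 1" by simp
    have "uu s (j+N) = 2 * ((real j + real N) * AA (j+N)) * s^(j+N+1)" by (simp add: uu_def)
    also have "\<dots> \<le> 2 * (real N * AA N * ((4::real)^(j+1) - 1) * AA j) * s^(j+N+1)"
      using coeff_ineq[OF N j] s by (intro mult_right_mono mult_left_mono) auto
    also have "\<dots> = w j" by (simp add: w_def power_add algebra_simps)
    finally show ?thesis .
  qed
  have lt: "uu s (1+N) < w 1"
  proof -
    have "uu s (1+N) = 2 * ((real 1 + real N) * AA (1+N)) * s^(1+N+1)" by (simp add: uu_def)
    also have "\<dots> < 2 * (real N * AA N * ((4::real)^(1+1) - 1) * AA 1) * s^(1+N+1)"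
      using coeff_ineq[OF N, of 1] s by (intro mult_strict_right_mono mult_strict_left_mono) auto
    also have "\<dots> = w 1" by (simp add: w_def power_add algebra_simps)
    finally show ?thesis .
  qed
  have D: "(\<lambda>j. w j - uu s (j+N)) sums (thm8_coeff N * x^(2*N+1) * tan x - Rm)"
    by (rule sums_diff[OF W R])
  have "0 < suminf (\<lambda>j. w j - uu s (j+N))"
    by (rule suminf_pos2[where i=1]) (use D sums_summable le lt in auto)
  then show ?thesis using D by (simp add: sums_iff Rm_def)
qed


lemma f_le10:
  assumes x: "pi/4 \<le> x" "x < pi/2"
  shows "(x / sin x)^2 + x / tan x < 10"
proof -
  have x0: "0 < x" using x pi_gt_zero by linarith
  have sx: "sin x \<ge> sqrt 2 / 2"
    using sin_monotone_2pi_le[of "pi/4" x] x sin_45 by simp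
  have s2: "(sin x)^2 \<ge> 1/2"
  proof -
    have "(sqrt 2 / 2)^2 \<le> (sin x)^2" using sx by (intro power_mono) auto
    then show ?thesis by (simp add: power_divide)
  qed
  have sp: "sin x > 0" using x0 x by (intro sin_gt_zero) auto
  have cp: "cos x > 0" using x0 x by (intro cos_gt_zero) auto
  have x2: "x < 2" using x pi_less_4 by linarith
  have "(x / sin x)^2 = x^2 / (sin x)^2" by (simp add: power_divide)
  also have "\<dots> \<le> x^2 / (1/2)" using s2 by (intro divide_left_mono) auto
  also have "\<dots> = 2 * x^2" by simp
  also have "\<dots> < 2 * 2^2"
  proof -
    have "x^2 < 2^2" using x0 x2 by (intro power_strict_mono) auto
    then show ?thesis by simp
  qed
  finally have a: "(x / sin x)^2 < 8" by simp
  have "cos x \<le> cos (pi/4)" using x x0 by (intro cos_monotone_0_pi_le) auto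
  then have cs: "cos x \<le> sin x" using sx cos_45 by simp
  have b: "x / tan x \<le> x"
  proof -
    have "x / tan x = x * cos x / sin x" using sp cp by (simp add: tan_def)
    also have "\<dots> \<le> x * sin x / sin x" using cs x0 sp by (intro divide_right_mono mult_left_mono) auto
    also have "\<dots> = x" using sp by simp
    finally show ?thesis .
  qed
  show ?thesis using a b x2 by linarith
qed

theorem theorem8:
  fixes N :: nat
  assumes "N \<ge> 1"
  shows "(\<forall>x::real. 0 < x \<and> x < pi / 2 \<longrightarrow>
            thm8_bound N 0 x < (x / sin x) ^ 2 + x / tan x \<and>
            (x / sin x) ^ 2 + x / tan x < thm8_bound N (thm8_coeff N) x)
       \<and> (\<forall>p::real. (\<forall>x::real. 0 < x \<and> x < pi / 2 \<longrightarrow>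
            thm8_bound N p x < (x / sin x) ^ 2 + x / tan x) \<longrightarrow> p \<le> 0)
       \<and> (\<forall>q::real. (\<forall>x::real. 0 < x \<and> x < pi / 2 \<longrightarrow>
            (x / sin x) ^ 2 + x / tan x < thm8_bound N q x) \<longrightarrow> thm8_coeff N \<le> q)"
proof (intro conjI allI impI)
  note N = assms
  have cN: "thm8_coeff N > 0" using N AA_pos[of N] by (simp add: coeff_eq)
  {
    fix x :: real assume x: "0 < x \<and> x < pi / 2"
    then have x': "0 < x" "x < pi/2" by auto
    have "uu (x^2) N > 0" using uu_pos N x' by simp
    then show "thm8_bound N 0 x < (x / sin x) ^ 2 + x / tan x"
      using tail_lower[OF N x'] unfolding bound_eq[OF N] by simp
    show "(x / sin x) ^ 2 + x / tan x < thm8_bound N (thm8_coeff N) x"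
      using tail_upper[OF N x'] unfolding bound_eq[OF N] by simp
  }
  {
    fix p :: real
    assume H: "\<forall>x::real. 0 < x \<and> x < pi / 2 \<longrightarrow> thm8_bound N p x < (x / sin x) ^ 2 + x / tan x"
    show "p \<le> 0"
    proof (rule ccontr)
      assume "\<not> p \<le> 0"
      then have p: "p > 0" by simp
      define c where "c = p * (pi/4)^(2*N+1)"
      have c: "c > 0" using p by (simp add: c_def)
      define M where "M = max 2 (10 / c)"
      have M: "M > 1" "M \<ge> 10 / c" by (auto simp: M_def)
      define x where "x = arctan M"
      have tx: "tan x = M" by (simp add: x_def tan_arctan)
      have x1: "pi/4 < x" using M arctan_less_iff[of 1 M] arctan_one by (simp add: x_def)
      have x2: "x < pi/2" using arctan_ubound[of M] by (simp add: x_def)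
      have x0: "0 < x" using x1 pi_gt_zero by linarith
      have "thm8_bound N p x < (x / sin x) ^ 2 + x / tan x" using H x0 x2 by simp
      also have "\<dots> < 10" using f_le10 x1 x2 by simp
      also have "10 \<le> c * M" using M c by (simp add: field_simps)
      also have "c * M \<le> p * x^(2*N+1) * tan x"
      proof -
        have "(pi/4)^(2*N+1) \<le> x^(2*N+1)" using x1 by (intro power_mono) auto
        then show ?thesis unfolding c_def tx using p M by (intro mult_right_mono mult_left_mono) auto
      qed
      also have "\<dots> \<le> thm8_bound N p x"
      proof -
        have "0 \<le> (\<Sum>k<N. uu (x^2) k)" using x0 by (intro sum_nonneg uu_nonneg) simp
        then show ?thesis unfolding bound_eq[OF N] by simp
      qed
      finally show False by simp
    qed
  }
  {
    fix q :: real
    assume H: "\<forall>x::real. 0 < x \<and> x < pi / 2 \<longrightarrow> (x / sin x) ^ 2 + x / tan x < thm8_bound N q x"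
    have key: "thm8_coeff N * x < q * tan x" if x: "0 < x" "x < pi/2" for x
    proof -
      have "uu (x^2) N < q * x^(2*N+1) * tan x"
        using tail_lower[OF N x] H x unfolding bound_eq[OF N] by force
      moreover have "uu (x^2) N = (thm8_coeff N * x) * x^(2*N+1)"
      proof -
        have e1: "x^(2*N+2) = (x^2)^(N+1)" by (subst power_mult[symmetric]) (simp add: algebra_simps)
        have e2: "x^(2*N+2) = x * x^(2*N+1)" by simp
        show ?thesis unfolding uu_def coeff_eq e1[symmetric] e2 by (simp add: algebra_simps)
      qed
      moreover have "x^(2*N+1) > 0" using x by simp
      ultimately have "(thm8_coeff N * x) * x^(2*N+1) < (q * tan x) * x^(2*N+1)" by (simp add: algebra_simps)
      then show ?thesis using \<open>x^(2*N+1) > 0\<close> mult_less_cancel_right_pos by blast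
    qed
    show "thm8_coeff N \<le> q"
    proof (rule ccontr)
      assume "\<not> thm8_coeff N \<le> q"
      then have qc: "q < thm8_coeff N" by simp
      show False
      proof (cases "q \<le> 0")
        case True
        have "0 < pi/4" "pi/4 < pi/2" by simp_all
        note k = key[OF this]
        have "tan (pi/4) > 0" by (simp add: tan_45)
        then have "q * tan (pi/4) \<le> 0" using True by (simp add: mult_nonpos_nonneg)
        moreover have "thm8_coeff N * (pi/4) > 0" using cN by simp
        ultimately show False using k by simp
      next
        case False
        then have q: "q > 0" by simp
        define r where "r = q / thm8_coeff N"
        have r: "0 < r" "r < 1" using q qc cN by (auto simp: r_def)
        define x where "x = arccos r"
        have cx: "cos x = r" using r by (simp add: x_def)
        have x2: "x < pi/2" using arccos_less_arccos[of 0 r] r by (simp add: x_def)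
        have x0: "0 < x" using arccos_less_arccos[of r 1] r by (simp add: x_def)
        have "sin x \<le> x" using x0 by (intro sin_x_le_x) simp
        then have "tan x \<le> x / r" using r by (simp add: tan_def cx divide_right_mono)
        then have "q * tan x \<le> q * (x / r)" using q by (intro mult_left_mono) auto
        also have "\<dots> = thm8_coeff N * x" using cN q by (simp add: r_def field_simps)
        finally show False using key[OF x0 x2] by simp
      qed
    qed
  }
qed


end
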